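(* Let $h>0$, $\beta>0$, $k\in\mathbb{N}$, $f(x)=hx^k$, and $\mathcal{B}(\alpha)=f(\alpha)+\sqrt2\beta\sqrt{1-\alpha^2}$ for $\alpha\in[-1,1]$. When $k=1$, for all $\beta>0$, $\sup_{\alpha\in[-1,1]}\mathcal{B}(\alpha)=\sqrt{h^2+2\beta^2}$ and the unique local and global maximizer of $\mathcal{B}$ is $\alpha=\frac{h}{\sqrt{h^2+2\beta^2}}$. When $k=2$ and $\beta\ge\beta_c(2,h)$, the unique local and global maximizer of $\mathcal{B}$ is $\alpha=0$; when $k=2$ and $\beta<\beta_c(2,h)$, $\sup_{\alpha\in[-1,1]}\mathcal{B}(\alpha)=h+\frac{\beta^2}{2h}$ and the unique local and global maximizers are $\alpha=\pm\sqrt{1-\frac{\beta^2}{2h^2}}$. When $k\ge3$ and $\beta\ge\tilde\beta_c(k,h)$, the unique local and global maximizer of $\mathcal{B}$ is $\alpha=0$. When $k\ge3$ and $\beta<\tilde\beta_c(k,h)$, let $\hat\alpha$ be the largest solution of $$\alpha^{2(k-2)}(1-\alpha^2)=2\left(\frac{\beta}{hk}\right)^2,$$ which is the unique solution of this equation in $\big(\sqrt{\tfrac{k-2}{k-1}},1\big)$. Then $\alpha=0$ and $\alpha=\hat\alpha$ are the only local maximizers of $\mathcal{B}$ in $[0,1]$; if $\beta>\beta_c(k,h)$ the global maximizer in $[0,1]$ is $\alpha=0$, if $\beta=\beta_c(k,h)$ both $0$ and $\hat\alpha$ are global maximizers, and if $\beta<\beta_c(k,h)$ the global maximizer in $[0,1]$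 is $\hat\alpha$. When $k\ge4$ is even, $-\hat\alpha$ is also a local (resp. global) maximizer whenever $\hat\alpha$ is, and it is the unique such one in $[-1,0)$; when $k\ge3$ is odd, $\mathcal{B}$ has no local maximizers in $[-1,0)$.
   Context: Critical values: $\beta_c(1,h)=\infty$, $\beta_c(2,h)=\sqrt2h$, and for $k\ge3$, $\beta_c(k,h)=\frac{h}{\sqrt2}\frac{k-1}{k-2}\left(1-\frac{1}{(k-1)^2}\right)^{k/2}$; for $k\ge3$, $\tilde\beta_c(k,h)=\frac{hk}{\sqrt2}\frac{(k-2)^{(k-2)/2}}{(k-1)^{(k-1)/2}}$ (which exceeds $\beta_c(k,h)$). *)

theory Defs
  imports Complex_Main
begin

definition Bfun :: "real \<Rightarrow> real \<Rightarrow> nat \<Rightarrow> real \<Rightarrow> real" where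
  "Bfun h \<beta> k \<alpha> = h * \<alpha> ^ k + sqrt 2 * \<beta> * sqrt (1 - \<alpha>\<^sup>2)"

definition local_maximizer :: "(real \<Rightarrow> real) \<Rightarrow> real \<Rightarrow> bool" where
  "local_maximizer f x \<longleftrightarrow> x \<in> {-1..1} \<and>
     (\<exists>e>0. \<forall>y\<in>{-1..1}. \<bar>y - x\<bar> < e \<longrightarrow> f y \<le> f x)"

definition global_maximizer :: "(real \<Rightarrow> real) \<Rightarrow> real \<Rightarrow> bool" where
  "global_maximizer f x \<longleftrightarrow> x \<in> {-1..1} \<and> (\<forall>y\<in>{-1..1}. f y \<le> f x)"

text \<open>Critical value beta_c(k,h) for k >= 2 (beta_c(1,h) = infinity is never used).\<close>
definition beta_c :: "nat \<Rightarrow> real \<Rightarrow> real" where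
  "beta_c k h = (if k = 2 then sqrt 2 * h
     else h / sqrt 2 * ((real k - 1) / (real k - 2))
          * (1 - 1 / (real k - 1)\<^sup>2) powr (real k / 2))"

definition beta_tilde_c :: "nat \<Rightarrow> real \<Rightarrow> real" where
  "beta_tilde_c k h = h * real k / sqrt 2
     * (real k - 2) powr ((real k - 2) / 2) / (real k - 1) powr ((real k - 1) / 2)"

end

theory Submission
  imports Defs
begin


definition sinc :: "(real \<Rightarrow> real) \<Rightarrow> real \<Rightarrow> real \<Rightarrow> bool" where
  "sinc f a b \<longleftrightarrow> (\<forall>x y. a \<le> x \<longrightarrow> x < y \<longrightarrow> y \<le> b \<longrightarrow> f x < f y)"
definition sdec :: "(real \<Rightarrow> real) \<Rightarrow> real \<Rightarrow> real \<Rightarrow> bool" where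
  "sdec f a b \<longleftrightarrow> (\<forall>x y. a \<le> x \<longrightarrow> x < y \<longrightarrow> y \<le> b \<longrightarrow> f y < f x)"

lemma sdec_join: "sdec f a b \<Longrightarrow> sdec f b c \<Longrightarrow> sdec f a c"
  unfolding sdec_def by (smt (verit))

lemma sinc_mirror: "(\<And>x. f (-x) = f x) \<Longrightarrow> sdec f a b \<Longrightarrow> sinc f (-b) (-a)"
  unfolding sdec_def sinc_def by (metis minus_less_iff minus_minus neg_le_iff_le)

lemma not_local_inc:
  assumes "sinc f a b" "a \<le> x" "x < b" "-1 \<le> a" "b \<le> 1"
  shows "\<not> local_maximizer f x"
proof
  assume "local_maximizer f x"
  then obtain e where e: "e > 0" "\<forall>y\<in>{-1..1}. \<bar>y - x\<bar> < e \<longrightarrow> f y \<le> f x"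
    unfolding local_maximizer_def by blast
  define y where "y = min (x + e/2) b"
  have "y \<in> {-1..1}" "\<bar>y - x\<bar> < e" "x < y" "y \<le> b" using assms e by (auto simp: y_def)
  then have "f y \<le> f x" "f x < f y" using e assms unfolding sinc_def by auto
  then show False by simp
qed

lemma not_local_dec:
  assumes "sdec f a b" "a < x" "x \<le> b" "-1 \<le> a" "b \<le> 1"
  shows "\<not> local_maximizer f x"
proof
  assume "local_maximizer f x"
  then obtain e where e: "e > 0" "\<forall>y\<in>{-1..1}. \<bar>y - x\<bar> < e \<longrightarrow> f y \<le> f x"
    unfolding local_maximizer_def by blast
  define y where "y = max (x - e/2) a"
  have "y \<in> {-1..1}" "\<bar>y - x\<bar> < e" "y < x" "a \<le> y" using assms e by (auto simp: y_def)
  then have "f y \<le> f x" "f x < f y" using e assms unfolding sdec_def by auto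
  then show False by simp
qed

lemma peak:
  assumes "sinc f a b" "sdec f b c" "a < b" "b < c" "-1 \<le> a" "c \<le> 1"
  shows "local_maximizer f b"
  unfolding local_maximizer_def
proof (intro conjI exI[of _ "min (b-a) (c-b)"] ballI impI)
  show "b \<in> {-1..1}" using assms by auto
  show "0 < min (b-a) (c-b)" using assms by auto
  fix y assume "y \<in> {-1..1}" "\<bar>y - b\<bar> < min (b - a) (c - b)"
  then have "a < y" "y < c" by auto
  then show "f y \<le> f b" using assms unfolding sinc_def sdec_def
    by (cases "y < b"; cases "y = b") (auto intro: less_imp_le)
qed

lemma global_local: "global_maximizer f x \<Longrightarrow> local_maximizer f x"
  unfolding global_maximizer_def local_maximizer_def by (auto intro: exI[of _ 1])

lemma global_exists: "continuous_on {-1..1} f \<Longrightarrow> \<exists>x. global_maximizer f x"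
  using continuous_attains_sup[of "{-1..1::real}" f] unfolding global_maximizer_def by auto

lemma global_SUP: "global_maximizer f x \<Longrightarrow> (SUP a\<in>{-1..1}. f a) = f x"
  unfolding global_maximizer_def by (intro cSup_eq_maximum) auto

lemma global_eq: "global_maximizer f x \<Longrightarrow> y \<in> {-1..1} \<Longrightarrow> f y = f x \<Longrightarrow> global_maximizer f y"
  unfolding global_maximizer_def by auto

lemma global_lt: "global_maximizer f x \<Longrightarrow> y \<in> {-1..1} \<Longrightarrow> f y < f x \<Longrightarrow> \<not> global_maximizer f y"
  unfolding global_maximizer_def by force

lemma local_mirror: "(\<And>x. f (-x) = f x) \<Longrightarrow> local_maximizer f x \<Longrightarrow> local_maximizer f (-x)"
proof -
  assume s: "\<And>x. f (-x) = f x" and l: "local_maximizer f x"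
  then obtain e where e: "x \<in> {-1..1}" "e > 0" "\<forall>y\<in>{- 1..1}. \<bar>y - x\<bar> < e \<longrightarrow> f y \<le> f x"
    unfolding local_maximizer_def by blast
  have "\<forall>y\<in>{- 1..1}. \<bar>y - - x\<bar> < e \<longrightarrow> f y \<le> f (- x)"
  proof (intro ballI impI)
    fix y :: real assume y: "y \<in> {-1..1}" "\<bar>y - - x\<bar> < e"
    have "-y \<in> {-1..1}" "\<bar>-y - x\<bar> < e" using y by auto
    then have "f (-y) \<le> f x" using e by blast
    then show "f y \<le> f (-x)" using s[of y] s[of x] by simp
  qed
  then show ?thesis unfolding local_maximizer_def using e by auto
qed

lemma global_mirror: "(\<And>x. f (-x) = f x) \<Longrightarrow> global_maximizer f x \<Longrightarrow> global_maximizer f (-x)"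
  unfolding global_maximizer_def by (metis atLeastAtMost_iff minus_le_iff neg_le_iff_le)

lemma sq_lt1: "-1 < (x::real) \<Longrightarrow> x < 1 \<Longrightarrow> 1 - x\<^sup>2 > 0"
  by (simp add: abs_square_less_1 abs_less_iff)

lemma sqrt_pos1: "-1 < (x::real) \<Longrightarrow> x < 1 \<Longrightarrow> sqrt (1 - x\<^sup>2) > 0"
  using sq_lt1 by simp

lemma B_deriv:
  assumes "-1 < x" "x < 1"
  shows "(Bfun h \<beta> k has_real_derivative
     (h * real k * x^(k-1) - sqrt 2 * \<beta> * x / sqrt (1 - x\<^sup>2))) (at x)"
proof -
  have p: "1 - x\<^sup>2 > 0" using assms by (rule sq_lt1)
  have d1: "((\<lambda>z. 1 - z\<^sup>2) has_real_derivative -(2*x)) (at x)"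
    by (auto intro!: derivative_eq_intros)
  have d2: "DERIV sqrt (1-x\<^sup>2) :> inverse (sqrt (1-x\<^sup>2))/2" by (rule DERIV_real_sqrt) (use p in auto)
  have d3: "((\<lambda>z. sqrt (1 - z\<^sup>2)) has_real_derivative inverse (sqrt (1-x\<^sup>2))/2 * -(2*x)) (at x)"
    by (rule DERIV_chain2[OF d2 d1])
  have d4: "((\<lambda>z. h * z ^ k + sqrt 2 * \<beta> * sqrt (1 - z\<^sup>2)) has_real_derivative
      h * (real k * x^(k-1)) + sqrt 2 * \<beta> * (inverse (sqrt (1-x\<^sup>2))/2 * -(2*x))) (at x)"
    using DERIV_pow[of k x] by (intro DERIV_add DERIV_cmult d3) simp_all
  show ?thesis unfolding Bfun_def[abs_def]
    by (rule DERIV_cong[OF d4]) (simp add: field_simps)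
qed

lemma B_cont: "continuous_on {-1..1} (Bfun h \<beta> k)"
  unfolding Bfun_def[abs_def] by (intro continuous_intros)

lemma B_sinc:
  assumes "-1 \<le> a" "a < b" "b \<le> 1"
    and "\<And>x. a < x \<Longrightarrow> x < b \<Longrightarrow> h * real k * x^(k-1) * sqrt (1 - x\<^sup>2) - sqrt 2 * \<beta> * x > 0"
  shows "sinc (Bfun h \<beta> k) a b"
  unfolding sinc_def
proof (intro allI impI)
  fix x y assume xy: "a \<le> x" "x < y" "y \<le> b"
  show "Bfun h \<beta> k x < Bfun h \<beta> k y"
  proof (rule DERIV_pos_imp_increasing_open[OF xy(2)])
    fix z assume z: "x < z" "z < y"
    have p: "sqrt (1 - z\<^sup>2) > 0" using z xy assms(1,3) by (intro sqrt_pos1) auto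
    have "h * real k * z^(k-1) - sqrt 2 * \<beta> * z / sqrt (1 - z\<^sup>2)
       = (h * real k * z^(k-1) * sqrt (1 - z\<^sup>2) - sqrt 2 * \<beta> * z) / sqrt (1 - z\<^sup>2)"
      using p by (simp add: field_simps)
    also have "\<dots> > 0" using p assms(4)[of z] z xy by simp
    finally show "\<exists>y. (Bfun h \<beta> k has_real_derivative y) (at z) \<and> 0 < y"
      using B_deriv[of z] z xy assms by force
  next
    show "continuous_on {x..y} (Bfun h \<beta> k)"
      using xy assms by (intro continuous_on_subset[OF B_cont]) auto
  qed
qed

lemma B_sdec:
  assumes "-1 \<le> a" "a < b" "b \<le> 1"
    and "\<And>x. a < x \<Longrightarrow> x < b \<Longrightarrow> h * real k * x^(k-1) * sqrt (1 - x\<^sup>2) - sqrt 2 * \<beta> * x < 0"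
  shows "sdec (Bfun h \<beta> k) a b"
  unfolding sdec_def
proof (intro allI impI)
  fix x y assume xy: "a \<le> x" "x < y" "y \<le> b"
  show "Bfun h \<beta> k y < Bfun h \<beta> k x"
  proof (rule DERIV_neg_imp_decreasing_open[OF xy(2)])
    fix z assume z: "x < z" "z < y"
    have p: "sqrt (1 - z\<^sup>2) > 0" using z xy assms(1,3) by (intro sqrt_pos1) auto
    have "h * real k * z^(k-1) - sqrt 2 * \<beta> * z / sqrt (1 - z\<^sup>2)
       = (h * real k * z^(k-1) * sqrt (1 - z\<^sup>2) - sqrt 2 * \<beta> * z) / sqrt (1 - z\<^sup>2)"
      using p by (simp add: field_simps)
    also have "\<dots> < 0" using p assms(4)[of z] z xy by (simp add: divide_neg_pos)
    finally show "\<exists>y. (Bfun h \<beta> k has_real_derivative y) (at z) \<and> y < 0"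
      using B_deriv[of z] z xy assms by force
  next
    show "continuous_on {x..y} (Bfun h \<beta> k)"
      using xy assms by (intro continuous_on_subset[OF B_cont]) auto
  qed
qed

lemma B_even: "even k \<Longrightarrow> Bfun h \<beta> k (-x) = Bfun h \<beta> k x"
  unfolding Bfun_def by simp



lemma local_in: "local_maximizer f x \<Longrightarrow> x \<in> {-1..1}"
  unfolding local_maximizer_def by auto

lemma case_k1:
  assumes hpos: "h > 0" and bpos: "\<beta> > 0"
  shows "(SUP a\<in>{-1..1}. Bfun h \<beta> 1 a) = sqrt (h\<^sup>2 + 2 * \<beta>\<^sup>2)
     \<and> {x. local_maximizer (Bfun h \<beta> 1) x} = {h / sqrt (h\<^sup>2 + 2 * \<beta>\<^sup>2)}
     \<and> {x. global_maximizer (Bfun h \<beta> 1) x} = {h / sqrt (h\<^sup>2 + 2 * \<beta>\<^sup>2)}"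
proof -
  define R where "R = sqrt (h\<^sup>2 + 2 * \<beta>\<^sup>2)"
  define a where "a = h / R"
  let ?B = "Bfun h \<beta> 1"
  have R2: "R\<^sup>2 = h\<^sup>2 + 2 * \<beta>\<^sup>2" unfolding R_def by simp
  have Rh: "R > h" unfolding R_def using hpos bpos
    by (metis add_less_cancel_left add.right_neutral mult_pos_pos real_less_rsqrt zero_less_numeral zero_less_power)
  have a0: "0 < a" and a1: "a < 1" using Rh hpos by (auto simp: a_def)
  have a2: "a\<^sup>2 = h\<^sup>2 / (h\<^sup>2 + 2 * \<beta>\<^sup>2)" unfolding a_def using R2 by (simp add: power_divide)
  have N1: "h * real 1 * x^(1-1) * sqrt (1 - x\<^sup>2) - sqrt 2 * \<beta> * x = h * sqrt (1 - x\<^sup>2) - sqrt 2 * \<beta> * x" for x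
    by simp
  have sq1: "(h * sqrt (1 - x\<^sup>2))\<^sup>2 = h\<^sup>2 * (1 - x\<^sup>2)" if "-1 < x" "x < 1" for x
    using sq_lt1[OF that] by (simp add: power_mult_distrib)
  have sq2: "(sqrt 2 * \<beta> * x)\<^sup>2 = 2 * \<beta>\<^sup>2 * x\<^sup>2" for x
    by (simp add: power_mult_distrib)
  have inc: "sinc ?B (-1) a"
  proof (rule B_sinc)
    fix x assume x: "-1 < x" "x < a"
    show "h * real 1 * x^(1-1) * sqrt (1 - x\<^sup>2) - sqrt 2 * \<beta> * x > 0"
    proof (cases "x \<le> 0")
      case True
      then show ?thesis using sqrt_pos1[of x] x a1 hpos bpos
        by (simp add: mult_nonneg_nonpos) (smt (verit) mult_pos_pos real_sqrt_gt_zero zero_less_numeral mult_nonneg_nonpos)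
    next
      case False
      then have "x\<^sup>2 < a\<^sup>2" using x by (simp add: power_strict_mono)
      moreover have "h\<^sup>2 + 2 * \<beta>\<^sup>2 > 0" using hpos by (simp add: add_pos_nonneg)
      ultimately have "x\<^sup>2 * (h\<^sup>2 + 2 * \<beta>\<^sup>2) < h\<^sup>2" using a2
        by (simp add: pos_less_divide_eq)
      then have "(sqrt 2 * \<beta> * x)\<^sup>2 < (h * sqrt (1 - x\<^sup>2))\<^sup>2"
        using sq1[of x] sq2[of x] x a1 by (simp add: algebra_simps)
      then have "sqrt 2 * \<beta> * x < h * sqrt (1 - x\<^sup>2)"
        by (rule power2_less_imp_less) (use sqrt_pos1[of x] x a1 hpos in simp)
      then show ?thesis by simp
    qed
  qed (use a0 a1 in auto)
  have dec: "sdec ?B a 1"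
  proof (rule B_sdec)
    fix x assume x: "a < x" "x < 1"
    have "a\<^sup>2 < x\<^sup>2" using x a0 by (simp add: power_strict_mono)
    moreover have "h\<^sup>2 + 2 * \<beta>\<^sup>2 > 0" using hpos by (simp add: add_pos_nonneg)
    ultimately have "h\<^sup>2 < x\<^sup>2 * (h\<^sup>2 + 2 * \<beta>\<^sup>2)" using a2
      by (simp add: pos_divide_less_eq)
    then have "(h * sqrt (1 - x\<^sup>2))\<^sup>2 < (sqrt 2 * \<beta> * x)\<^sup>2"
      using sq1[of x] sq2[of x] x a0 by (simp add: algebra_simps)
    then have "h * sqrt (1 - x\<^sup>2) < sqrt 2 * \<beta> * x"
      by (rule power2_less_imp_less) (use x a0 bpos in simp)
    then show "h * real 1 * x^(1-1) * sqrt (1 - x\<^sup>2) - sqrt 2 * \<beta> * x < 0" by simp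
  qed (use a0 a1 in auto)
  have loc: "{x. local_maximizer ?B x} = {a}"
  proof (intro set_eqI iffI)
    fix x assume l: "x \<in> {x. local_maximizer ?B x}"
    then have "x \<in> {-1..1}" by (auto dest: local_in)
    then show "x \<in> {a}" using not_local_inc[OF inc, of x] not_local_dec[OF dec, of x] l a0 a1
      by (cases "x < a"; cases "a < x") auto
  next
    fix x assume "x \<in> {a}"
    then show "x \<in> {x. local_maximizer ?B x}" using peak[OF inc dec] a0 a1 by auto
  qed
  obtain g where g: "global_maximizer ?B g" using global_exists[OF B_cont] by blast
  then have ga: "g = a" using global_local loc by blast
  have glob: "{x. global_maximizer ?B x} = {a}"
    using g ga global_local loc by blast
  have "h\<^sup>2 + 2 * \<beta>\<^sup>2 > 0" using hpos by (simp add: add_pos_nonneg)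
  then have "1 - a\<^sup>2 = (sqrt 2 * \<beta> / R)\<^sup>2" using a2 R2
    by (simp add: power_divide power_mult_distrib divide_simps algebra_simps)
  then have "sqrt (1 - a\<^sup>2) = sqrt 2 * \<beta> / R" using bpos Rh hpos by simp
  then have "?B a = h * a + sqrt 2 * \<beta> * (sqrt 2 * \<beta> / R)" unfolding Bfun_def by simp
  also have "\<dots> = (h\<^sup>2 + 2 * \<beta>\<^sup>2) / R" unfolding a_def using Rh hpos
    by (simp add: field_simps power2_eq_square)
  also have "\<dots> = R" using R2 Rh hpos by (simp add: field_simps power2_eq_square)
  finally have "?B a = R" .
  then show ?thesis using global_SUP[OF g] ga loc glob unfolding R_def a_def by simp
qed



lemma sdec_mirror: "(\<And>x. f (-x) = f x) \<Longrightarrow> sinc f a b \<Longrightarrow> sdec f (-b) (-a)"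
  unfolding sdec_def sinc_def by (metis minus_less_iff minus_minus neg_le_iff_le)

lemma N2: "h * real 2 * x^(2-1) * sqrt (1 - x\<^sup>2) - sqrt 2 * \<beta> * x = x * (2 * h * sqrt (1 - x\<^sup>2) - sqrt 2 * \<beta>)"
  by (simp add: algebra_simps)

lemma case_k2a:
  assumes hpos: "h > 0" and bpos: "\<beta> > 0" and hb: "\<beta> \<ge> beta_c 2 h"
  shows "{x. local_maximizer (Bfun h \<beta> 2) x} = {0} \<and> {x. global_maximizer (Bfun h \<beta> 2) x} = {0}"
proof -
  let ?B = "Bfun h \<beta> 2"
  have "sqrt 2 * (sqrt 2 * h) \<le> sqrt 2 * \<beta>" using hb unfolding beta_c_def
    by (intro mult_left_mono) auto
  then have hb': "2 * h \<le> sqrt 2 * \<beta>" by (simp add: mult.assoc[symmetric])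
  have dec: "sdec ?B 0 1"
  proof (rule B_sdec)
    fix x :: real assume x: "0 < x" "x < 1"
    have "sqrt (1 - x\<^sup>2) < 1" using x by (simp add: power_less_one_iff)
    then have "2 * h * sqrt (1 - x\<^sup>2) < 2 * h" using hpos by simp
    then show "h * real 2 * x^(2-1) * sqrt (1 - x\<^sup>2) - sqrt 2 * \<beta> * x < 0"
      unfolding N2 using x hb' by (simp add: mult_pos_neg)
  qed auto
  have inc: "sinc ?B (-1) 0" using sinc_mirror[OF _ dec] B_even[of 2] by simp
  have loc: "{x. local_maximizer ?B x} = {0}"
  proof (intro set_eqI iffI)
    fix x :: real assume l: "x \<in> {x. local_maximizer ?B x}"
    then have "x \<in> {-1..1}" by (auto dest: local_in)
    then show "x \<in> {0}" using not_local_inc[OF inc, of x] not_local_dec[OF dec, of x] l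
      by (cases "x < 0"; cases "0 < x") auto
  next
    fix x :: real assume "x \<in> {0}"
    then show "x \<in> {x. local_maximizer ?B x}" using peak[OF inc dec] by auto
  qed
  obtain g where g: "global_maximizer ?B g" using global_exists[OF B_cont] by blast
  have g0: "g = 0" using g loc global_local by blast
  have "{x. global_maximizer ?B x} = {0}"
  proof (intro set_eqI iffI)
    fix x assume "x \<in> {x. global_maximizer ?B x}"
    then show "x \<in> {0}" using loc global_local by blast
  qed (use g g0 in auto)
  then show ?thesis using loc by blast
qed

lemma case_k2b:
  assumes hpos: "h > 0" and bpos: "\<beta> > 0" and hb: "\<beta> < beta_c 2 h"
  shows "(SUP a\<in>{-1..1}. Bfun h \<beta> 2 a) = h + \<beta>\<^sup>2 / (2 * h)
     \<and> {x. local_maximizer (Bfun h \<beta> 2) x} =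
         {sqrt (1 - \<beta>\<^sup>2 / (2 * h\<^sup>2)), - sqrt (1 - \<beta>\<^sup>2 / (2 * h\<^sup>2))}
     \<and> {x. global_maximizer (Bfun h \<beta> 2) x} =
         {sqrt (1 - \<beta>\<^sup>2 / (2 * h\<^sup>2)), - sqrt (1 - \<beta>\<^sup>2 / (2 * h\<^sup>2))}"
proof -
  let ?B = "Bfun h \<beta> 2"
  define s where "s = sqrt (1 - \<beta>\<^sup>2 / (2 * h\<^sup>2))"
  have "\<beta>\<^sup>2 < (sqrt 2 * h)\<^sup>2" using hb bpos unfolding beta_c_def
    by (intro power_strict_mono) auto
  then have hb2: "\<beta>\<^sup>2 < 2 * h\<^sup>2" by (simp add: power_mult_distrib)
  have q0: "0 < \<beta>\<^sup>2 / (2 * h\<^sup>2)" using bpos hpos by simp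
  have q1: "\<beta>\<^sup>2 / (2 * h\<^sup>2) < 1" using hb2 hpos by simp
  have s0: "0 < s" and s1: "s < 1" unfolding s_def using q0 q1 by auto
  have s2: "s\<^sup>2 = 1 - \<beta>\<^sup>2 / (2 * h\<^sup>2)" unfolding s_def using q1 by simp
  have key: "(2 * h * sqrt (1 - x\<^sup>2))\<^sup>2 - (sqrt 2 * \<beta>)\<^sup>2 = 4 * h\<^sup>2 * (s\<^sup>2 - x\<^sup>2)"
    if "0 < x" "x < 1" for x
    using sq_lt1[of x] that s2 hpos by (simp add: power_mult_distrib field_simps)
  have inc: "sinc ?B 0 s"
  proof (rule B_sinc)
    fix x :: real assume x: "0 < x" "x < s"
    have "x\<^sup>2 < s\<^sup>2" using x by (simp add: power_strict_mono)
    moreover have "x < 1" using x s1 by simp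
    moreover have "4 * h\<^sup>2 * (s\<^sup>2 - x\<^sup>2) > 0" using hpos \<open>x\<^sup>2 < s\<^sup>2\<close> by simp
    ultimately have "(sqrt 2 * \<beta>)\<^sup>2 < (2 * h * sqrt (1 - x\<^sup>2))\<^sup>2" using key[of x] x by linarith
    then have "sqrt 2 * \<beta> < 2 * h * sqrt (1 - x\<^sup>2)"
      by (rule power2_less_imp_less) (use hpos sqrt_pos1[of x] x s1 in simp)
    then show "h * real 2 * x^(2-1) * sqrt (1 - x\<^sup>2) - sqrt 2 * \<beta> * x > 0"
      unfolding N2 using x by simp
  qed (use s0 s1 in auto)
  have dec: "sdec ?B s 1"
  proof (rule B_sdec)
    fix x :: real assume x: "s < x" "x < 1"
    have "s\<^sup>2 < x\<^sup>2" using x s0 by (simp add: power_strict_mono)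
    moreover have "4 * h\<^sup>2 * (s\<^sup>2 - x\<^sup>2) < 0" using hpos \<open>s\<^sup>2 < x\<^sup>2\<close> by (simp add: mult_pos_neg)
    ultimately have "(2 * h * sqrt (1 - x\<^sup>2))\<^sup>2 < (sqrt 2 * \<beta>)\<^sup>2" using key[of x] x s0 by linarith
    then have "2 * h * sqrt (1 - x\<^sup>2) < sqrt 2 * \<beta>"
      by (rule power2_less_imp_less) (use bpos in simp)
    then show "h * real 2 * x^(2-1) * sqrt (1 - x\<^sup>2) - sqrt 2 * \<beta> * x < 0"
      unfolding N2 using x s0 by (simp add: mult_pos_neg)
  qed (use s0 s1 in auto)
  have dec': "sdec ?B (-s) 0" using sdec_mirror[OF _ inc] B_even[of 2] by simp
  have inc': "sinc ?B (-1) (-s)" using sinc_mirror[OF _ dec] B_even[of 2] by simp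
  have loc: "{x. local_maximizer ?B x} = {s, -s}"
  proof (intro set_eqI iffI)
    fix x :: real assume l: "x \<in> {x. local_maximizer ?B x}"
    then have "x \<in> {-1..1}" by (auto dest: local_in)
    then show "x \<in> {s, -s}" using not_local_inc[OF inc, of x] not_local_dec[OF dec, of x]
      not_local_inc[OF inc', of x] not_local_dec[OF dec', of x] l s0 s1
      by (cases "x < -s"; cases "x < 0"; cases "x < s"; cases "x = s"; cases "x = -s") auto
  next
    fix x assume "x \<in> {s, -s}"
    then show "x \<in> {x. local_maximizer ?B x}" using peak[OF inc dec] peak[OF inc' dec'] s0 s1 by auto
  qed
  obtain g where g: "global_maximizer ?B g" using global_exists[OF B_cont] by blast
  then have gs: "g = s \<or> g = -s" using loc global_local by blast
  have e: "?B (-s) = ?B s" using B_even[of 2] by simp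
  have gs': "global_maximizer ?B s"
  proof (cases "g = s")
    case False
    then have "g = -s" using gs by simp
    then show ?thesis using global_eq[OF g, of s] e s0 s1 by simp
  qed (use g in simp)
  have gms: "global_maximizer ?B (-s)" using global_eq[OF gs' _ e] s0 s1 by auto
  have glob: "{x. global_maximizer ?B x} = {s, -s}" using gs' gms loc global_local by blast
  have "1 - s\<^sup>2 = (\<beta> / (sqrt 2 * h))\<^sup>2" using s2 by (simp add: power_divide power_mult_distrib)
  then have "sqrt (1 - s\<^sup>2) = \<beta> / (sqrt 2 * h)" using bpos hpos by simp
  then have "?B s = h * s\<^sup>2 + sqrt 2 * \<beta> * (\<beta> / (sqrt 2 * h))" unfolding Bfun_def by simp
  also have "\<dots> = h * (1 - \<beta>\<^sup>2 / (2 * h\<^sup>2)) + sqrt 2 * \<beta> * (\<beta> / (sqrt 2 * h))" by (simp only: s2)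
  also have "\<dots> = h + \<beta>\<^sup>2 / (2 * h)" using hpos by (simp add: field_simps power2_eq_square)
  finally have "?B s = h + \<beta>\<^sup>2 / (2 * h)" .
  then show ?thesis using global_SUP[OF gs'] loc glob unfolding s_def by simp
qed



definition phi :: "nat \<Rightarrow> real \<Rightarrow> real" where
  "phi n x = x ^ (2 * n) * (1 - x\<^sup>2)"

lemma phi_deriv:
  assumes "n \<ge> 1"
  shows "(phi n has_real_derivative 2 * x ^ (2*n - 1) * (real n - (real n + 1) * x\<^sup>2)) (at x)"
proof -
  have d1: "((\<lambda>x. x ^ (2*n)) has_real_derivative real (2*n) * x ^ (2*n - 1)) (at x)"
    using DERIV_pow[of "2*n" x] by simp
  have d2: "((\<lambda>x. 1 - x\<^sup>2) has_real_derivative - (2 * x)) (at x)"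
    by (auto intro!: derivative_eq_intros)
  have d: "(phi n has_real_derivative (real (2*n) * x ^ (2*n - 1)) * (1 - x\<^sup>2) + (- (2 * x)) * x ^ (2*n)) (at x)"
    unfolding phi_def[abs_def] by (rule DERIV_mult[OF d1 d2])
  obtain j where j: "2 * n - 1 = j" "2 * n = Suc j" using assms by (intro that[of "2*n-1"]) auto
  have xx: "x^(2*n) = x * x^(2*n-1)" using j by simp
  show ?thesis
    apply (rule DERIV_cong[OF d])
    unfolding xx of_nat_mult by (simp add: algebra_simps power2_eq_square)
qed

lemma phi_cont: "continuous_on S (phi n)"
  unfolding phi_def[abs_def] by (intro continuous_intros)

lemma phi_inc:
  assumes "n \<ge> 1"
  shows "sinc (phi n) 0 (sqrt (real n / (real n + 1)))"
  unfolding sinc_def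
proof (intro allI impI)
  fix x y :: real assume xy: "0 \<le> x" "x < y" "y \<le> sqrt (real n / (real n + 1))"
  show "phi n x < phi n y"
  proof (rule DERIV_pos_imp_increasing_open[OF xy(2)])
    fix z assume z: "x < z" "z < y"
    have "z\<^sup>2 < (sqrt (real n / (real n + 1)))\<^sup>2" using z xy by (intro power_strict_mono) auto
    then have "z\<^sup>2 < real n / (real n + 1)" by simp
    then have "(real n + 1) * z\<^sup>2 < real n" by (simp add: field_simps)
    moreover have "z ^ (2*n - 1) > 0" using z xy by simp
    ultimately have "2 * z ^ (2*n - 1) * (real n - (real n + 1) * z\<^sup>2) > 0" by simp
    then show "\<exists>y. (phi n has_real_derivative y) (at z) \<and> 0 < y" using phi_deriv[OF assms] by blast
  qed (rule phi_cont)
qed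

lemma phi_dec:
  assumes "n \<ge> 1"
  shows "sdec (phi n) (sqrt (real n / (real n + 1))) 1"
  unfolding sdec_def
proof (intro allI impI)
  fix x y :: real assume xy: "sqrt (real n / (real n + 1)) \<le> x" "x < y" "y \<le> 1"
  show "phi n y < phi n x"
  proof (rule DERIV_neg_imp_decreasing_open[OF xy(2)])
    fix z assume z: "x < z" "z < y"
    have "(sqrt (real n / (real n + 1)))\<^sup>2 < z\<^sup>2" using z xy by (intro power_strict_mono) auto
    then have "real n / (real n + 1) < z\<^sup>2" by simp
    then have "real n < (real n + 1) * z\<^sup>2" by (simp add: field_simps)
    moreover have "0 \<le> sqrt (real n / (real n + 1))" by simp
    then have "z > 0" using z xy by linarith
    then have "z ^ (2*n - 1) > 0" by simp
    ultimately have "2 * z ^ (2*n - 1) * (real n - (real n + 1) * z\<^sup>2) < 0" by (simp add: mult_pos_neg)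
    then show "\<exists>y. (phi n has_real_derivative y) (at z) \<and> y < 0" using phi_deriv[OF assms] by blast
  qed (rule phi_cont)
qed

lemma phi_max:
  assumes "n \<ge> 1"
  shows "phi n (sqrt (real n / (real n + 1))) = real n ^ n / (real n + 1) ^ (n + 1)"
proof -
  have "phi n (sqrt (real n / (real n + 1))) = (real n / (real n + 1)) ^ n * (1 - real n / (real n + 1))"
    unfolding phi_def by (simp add: power_mult)
  also have "\<dots> = real n ^ n / (real n + 1) ^ (n + 1)"
    by (simp add: power_divide field_simps)
  finally show ?thesis .
qed

lemma m_bounds:
  assumes "n \<ge> 1"
  shows "0 < sqrt (real n / (real n + 1))" "sqrt (real n / (real n + 1)) < 1"
  using assms by auto

lemma phi_lt_max:
  assumes "n \<ge> 1" "0 \<le> x" "x \<le> 1" "x \<noteq> sqrt (real n / (real n + 1))"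
  shows "phi n x < real n ^ n / (real n + 1) ^ (n + 1)"
  using phi_inc[OF assms(1)] phi_dec[OF assms(1)] assms m_bounds[OF assms(1)]
  unfolding sinc_def sdec_def phi_max[OF assms(1), symmetric]
  by (cases "x < sqrt (real n / (real n + 1))") auto

lemma phi_zero1: "n \<ge> 1 \<Longrightarrow> phi n 0 = 0" "phi n 1 = 0"
  unfolding phi_def by auto

lemma phi_nonpos: "x \<ge> 1 \<Longrightarrow> phi n x \<le> 0"
  unfolding phi_def by (intro mult_nonneg_nonpos) (auto simp: one_le_power abs_le_square_iff)



lemma N_factor:
  assumes "k \<ge> 2"
  shows "h * real k * x^(k-1) * sqrt (1 - x\<^sup>2) - sqrt 2 * \<beta> * x
       = x * (h * real k * x^(k-2) * sqrt (1 - x\<^sup>2) - sqrt 2 * \<beta>)"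
proof -
  have "x^(k-1) = x * x^(k-2)" using assms by (metis Suc_diff_Suc One_nat_def le_add_diff_inverse numeral_2_eq_2 Suc_le_lessD power_Suc)
  then show ?thesis by (simp add: algebra_simps)
qed

lemma E_sq:
  assumes "0 < x" "x < 1" "h > 0" "k \<ge> 3"
  shows "(h * real k * x^(k-2) * sqrt (1 - x\<^sup>2))\<^sup>2 = (h * real k)\<^sup>2 * phi (k-2) x"
proof -
  have e: "(x^(k-2))\<^sup>2 = x^(2*(k-2))" by (metis power_mult mult.commute)
  have "(h * real k * x^(k-2) * sqrt (1 - x\<^sup>2))\<^sup>2 = (h * real k)\<^sup>2 * (x^(k-2))\<^sup>2 * (sqrt (1 - x\<^sup>2))\<^sup>2"
    by (simp add: power_mult_distrib)
  also have "\<dots> = (h * real k)\<^sup>2 * phi (k-2) x"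
    unfolding e phi_def using sq_lt1[of x] assms by simp
  finally show ?thesis .
qed

lemma c_sq:
  assumes "h > 0" "k \<ge> 3"
  shows "(sqrt 2 * \<beta>)\<^sup>2 = (h * real k)\<^sup>2 * (2 * (\<beta> / (h * real k))\<^sup>2)"
  using assms by (simp add: power_mult_distrib power_divide)

lemma N_pos:
  assumes "0 < x" "x < 1" "h > 0" "\<beta> > 0" "k \<ge> 3" "phi (k-2) x > 2 * (\<beta> / (h * real k))\<^sup>2"
  shows "h * real k * x^(k-1) * sqrt (1 - x\<^sup>2) - sqrt 2 * \<beta> * x > 0"
proof -
  have p: "(h * real k)\<^sup>2 > 0" using assms by simp
  have "(sqrt 2 * \<beta>)\<^sup>2 < (h * real k * x^(k-2) * sqrt (1 - x\<^sup>2))\<^sup>2"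
    unfolding E_sq[OF assms(1-3,5)] c_sq[OF assms(3,5)] using assms(6) p by simp
  then have "sqrt 2 * \<beta> < h * real k * x^(k-2) * sqrt (1 - x\<^sup>2)"
    by (rule power2_less_imp_less) (use assms sqrt_pos1[of x] in simp)
  moreover have "k \<ge> 2" using assms by simp
  ultimately show ?thesis unfolding N_factor[OF \<open>k \<ge> 2\<close>] using assms by simp
qed

lemma N_neg:
  assumes "0 < x" "x < 1" "h > 0" "\<beta> > 0" "k \<ge> 3" "phi (k-2) x < 2 * (\<beta> / (h * real k))\<^sup>2"
  shows "h * real k * x^(k-1) * sqrt (1 - x\<^sup>2) - sqrt 2 * \<beta> * x < 0"
proof -
  have p: "(h * real k)\<^sup>2 > 0" using assms by simp
  have "(h * real k * x^(k-2) * sqrt (1 - x\<^sup>2))\<^sup>2 < (sqrt 2 * \<beta>)\<^sup>2"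
    unfolding E_sq[OF assms(1-3,5)] c_sq[OF assms(3,5)] using assms(6) p by simp
  then have "h * real k * x^(k-2) * sqrt (1 - x\<^sup>2) < sqrt 2 * \<beta>"
    by (rule power2_less_imp_less) (use assms in simp)
  moreover have "k \<ge> 2" using assms by simp
  ultimately show ?thesis unfolding N_factor[OF \<open>k \<ge> 2\<close>] using assms by (simp add: mult_pos_neg)
qed

lemma odd_inc:
  assumes "odd k" "h > 0" "\<beta> > 0"
  shows "sinc (Bfun h \<beta> k) (-1) 0"
proof (rule B_sinc)
  fix x :: real assume x: "-1 < x" "x < 0"
  have "even (k - 1)" using assms(1) by simp
  then have "x^(k-1) \<ge> 0" by (simp add: zero_le_even_power)
  then have "h * real k * x^(k-1) * sqrt (1 - x\<^sup>2) \<ge> 0" using assms sq_lt1[of x] x by (intro mult_nonneg_nonneg) auto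
  moreover have "sqrt 2 * \<beta> * x < 0" using x assms by (simp add: mult_pos_neg)
  ultimately show "h * real k * x^(k-1) * sqrt (1 - x\<^sup>2) - sqrt 2 * \<beta> * x > 0" by linarith
qed auto

lemma odd_part:
  assumes "odd k" "h > 0" "\<beta> > 0"
  shows "{x\<in>{-1..<0}. local_maximizer (Bfun h \<beta> k) x} = {}"
  using not_local_inc[OF odd_inc[OF assms]] by auto

lemma B0: "k \<ge> 1 \<Longrightarrow> Bfun h \<beta> k 0 = sqrt 2 * \<beta>"
  unfolding Bfun_def by simp

lemma beta_tilde_sq:
  assumes "k \<ge> 3" "h > 0"
  shows "(beta_tilde_c k h)\<^sup>2 = (h * real k)\<^sup>2 / 2 * (real (k-2) ^ (k-2) / (real (k-2) + 1) ^ (k-2 + 1))"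
proof -
  define n where "n = k - 2"
  have n: "k = n + 2" "n \<ge> 1" using assms unfolding n_def by auto
  have r1: "real k - 2 = real n" "real k - 1 = real (n + 1)" using n by auto
  have s1: "((real n) powr (real n / 2))\<^sup>2 = real n ^ n"
    using n by (simp add: powr_half_sqrt_powr powr_realpow)
  have e: "real (n+1) powr (real (n+1)) = real (n+1)^(n+1)" by (rule powr_realpow) simp
  have s2: "(real (n+1) powr (real (n+1) / 2))\<^sup>2 = real (n+1) ^ (n+1)"
    unfolding powr_half_sqrt_powr[of "real (n+1)" "real (n+1)", OF of_nat_0_le_iff] e by simp
  have "(beta_tilde_c k h)\<^sup>2 = (h * real k)\<^sup>2 / 2 * (real n ^ n / real (n+1) ^ (n+1))"
    unfolding beta_tilde_c_def r1 s1[symmetric] s2[symmetric]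
    by (simp add: power_mult_distrib power_divide)
  then show ?thesis using n by (simp add: add.commute)
qed



lemma beta_c_props:
  assumes "k \<ge> 3" "h > 0"
  defines "ac \<equiv> sqrt (1 - 1 / (real k - 1)\<^sup>2)"
  shows "beta_c k h > 0"
    and "2 * (beta_c k h / (h * real k))\<^sup>2 = phi (k-2) ac"
    and "sqrt (real (k-2) / (real (k-2) + 1)) < ac" and "ac < 1"
    and "sqrt (1 - ac\<^sup>2) = 1 / (real k - 1)"
proof -
  define n where "n = k - 2"
  have n: "k = n + 2" "n \<ge> 1" using assms unfolding n_def by auto
  have r1: "real k - 2 = real n" "real k - 1 = real n + 1" "real k = real n + 2" using n by auto
  define q where "q = 1 - 1 / (real n + 1)\<^sup>2"
  have q_eq: "q = real n * (real n + 2) / (real n + 1)\<^sup>2"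
  proof -
    have d: "(real n + 1)\<^sup>2 \<noteq> 0" by simp
    have "q = ((real n + 1)\<^sup>2 - 1) / (real n + 1)\<^sup>2" unfolding q_def using d by (simp add: diff_divide_distrib)
    also have "(real n + 1)\<^sup>2 - 1 = real n * (real n + 2)" by (simp add: power2_eq_square algebra_simps)
    finally show ?thesis .
  qed
  have q0: "q > 0" unfolding q_eq using n by simp
  have q1: "q < 1" unfolding q_def using n by simp
  have acq: "ac = sqrt q" unfolding ac_def q_def r1 by simp
  have bc: "beta_c k h = h / sqrt 2 * ((real n + 1) / real n) * q powr (real k / 2)"
    unfolding beta_c_def q_def r1 using n by (simp add: add.commute)
  have e: "q powr (real k) = q ^ k" using q0 by (rule powr_realpow)
  have qk: "(q powr (real k / 2))\<^sup>2 = q ^ k"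
    unfolding powr_half_sqrt_powr[of q "real k", OF less_imp_le[OF q0]] e using q0 by simp
  show "beta_c k h > 0" unfolding bc using assms q0 n by simp
  have "2 * (beta_c k h / (h * real k))\<^sup>2 = (real n + 1)\<^sup>2 / (real n ^ 2 * (real n + 2)\<^sup>2) * q\<^sup>2 * q ^ n"
  proof -
    define P where "P = q powr (real k / 2)"
    have kpos: "real k > 0" using n by simp
    have "beta_c k h = (h * real k) * (((real n + 1) / (sqrt 2 * real n * real k)) * P)"
    proof -
      have npos: "real n > 0" using n by simp
      show ?thesis unfolding bc P_def using assms(2) kpos npos by (simp add: field_simps)
    qed
    then have "beta_c k h / (h * real k) = ((real n + 1) / (sqrt 2 * real n * real k)) * P"
      using assms kpos by simp
    then have "2 * (beta_c k h / (h * real k))\<^sup>2 = 2 * ((real n + 1)\<^sup>2 / (2 * (real n)\<^sup>2 * (real k)\<^sup>2)) * P\<^sup>2"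
      by (simp add: power_mult_distrib power_divide)
    also have "\<dots> = (real n + 1)\<^sup>2 / ((real n)\<^sup>2 * (real k)\<^sup>2) * q ^ k"
      unfolding P_def qk by simp
    also have "q ^ k = q\<^sup>2 * q ^ n" unfolding n(1) by (simp add: power_add power2_eq_square)
    finally show ?thesis unfolding r1(3) by simp
  qed
  also have "\<dots> = q ^ n / (real n + 1)\<^sup>2"
  proof -
    have npos: "real n > 0" using n by simp
    have qq: "(real n + 1)\<^sup>2 / ((real n)\<^sup>2 * (real n + 2)\<^sup>2) * q\<^sup>2 = 1 / (real n + 1)\<^sup>2"
    proof -
      have aux: "b\<^sup>2 / (a\<^sup>2 * c\<^sup>2) * (a * c / b\<^sup>2)\<^sup>2 = 1 / b\<^sup>2" if "a > 0" "b > 0" "c > 0" for a b c :: real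
        using that by (simp add: field_simps power2_eq_square)
      show ?thesis unfolding q_eq by (rule aux) (use npos in auto)
    qed
    have "(real n + 1)\<^sup>2 / ((real n)\<^sup>2 * (real n + 2)\<^sup>2) * q\<^sup>2 * q ^ n = 1 / (real n + 1)\<^sup>2 * q ^ n"
      by (simp only: qq)
    then show ?thesis by simp
  qed
  also have "\<dots> = phi (k-2) ac"
    unfolding phi_def acq n_def[symmetric] using q0 by (simp add: power_mult q_def)
  finally show "2 * (beta_c k h / (h * real k))\<^sup>2 = phi (k-2) ac" .
  have "real n / (real n + 1) < q"
  proof -
    have "(real n + 1) * 1 < (real n + 1) * (real n + 1)" using n by (intro mult_strict_left_mono) auto
    then have b: "real n + 1 < (real n + 1)\<^sup>2" by (simp add: power2_eq_square)
    have "1 / (real n + 1)\<^sup>2 < 1 / (real n + 1)" by (rule divide_strict_left_mono[OF b]) auto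
    moreover have "real n / (real n + 1) = 1 - 1 / (real n + 1)" by (simp add: field_simps)
    ultimately show ?thesis unfolding q_def by linarith
  qed
  then show "sqrt (real (k-2) / (real (k-2) + 1)) < ac" unfolding acq n_def[symmetric] by simp
  show "ac < 1" unfolding acq using q1 q0 by simp
  have "1 - ac\<^sup>2 = (1 / (real n + 1))\<^sup>2" unfolding acq using q0 by (simp add: q_def power_divide)
  then show "sqrt (1 - ac\<^sup>2) = 1 / (real k - 1)" unfolding r1 by simp
qed



lemma Bcomp:
  assumes "k \<ge> 3" "h > 0" "\<beta> > 0" "0 < a" "a < 1" "phi (k-2) a = 2 * (\<beta> / (h * real k))\<^sup>2"
  shows "Bfun h \<beta> k a - Bfun h \<beta> k 0
     = h * a^(k-2) * (1 - sqrt (1 - a\<^sup>2)) * (1 - (real k - 1) * sqrt (1 - a\<^sup>2))"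
proof -
  define \<sigma> where "\<sigma> = sqrt (1 - a\<^sup>2)"
  define t where "t = a^(k-2)"
  have sp: "\<sigma> > 0" unfolding \<sigma>_def using sqrt_pos1[of a] assms by simp
  have s2: "\<sigma>\<^sup>2 = 1 - a\<^sup>2" unfolding \<sigma>_def using sq_lt1[of a] assms by simp
  have "(h * real k * a^(k-2) * sqrt (1 - a\<^sup>2))\<^sup>2 = (sqrt 2 * \<beta>)\<^sup>2"
    unfolding E_sq[OF assms(4,5,2,1)] c_sq[OF assms(2,1)] assms(6) ..
  then have key: "h * real k * t * \<sigma> = sqrt 2 * \<beta>" unfolding t_def \<sigma>_def
    by (rule power2_eq_imp_eq) (use assms sqrt_pos1[of a] in auto)
  have ak: "a^k = t * a\<^sup>2" unfolding t_def using assms(1)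
    by (metis le_add_diff_inverse2 le_trans numeral_le_iff one_le_numeral power_add semiring_norm(72) semiring_norm(69) le_numeral_extra(4) numeral_2_eq_2 one_add_one power2_eq_square power_add  eval_nat_numeral(3) nat_le_linear Suc_leD)
  have "Bfun h \<beta> k a - Bfun h \<beta> k 0 = h * t * a\<^sup>2 + sqrt 2 * \<beta> * \<sigma> - sqrt 2 * \<beta>"
    unfolding Bfun_def ak \<sigma>_def using assms(1) by simp
  also have "\<dots> = h * t * (1 - \<sigma>\<^sup>2) + (h * real k * t * \<sigma>) * \<sigma> - h * real k * t * \<sigma>"
    unfolding key s2 by simp
  also have "\<dots> = h * t * (1 - \<sigma>) * (1 - (real k - 1) * \<sigma>)"
    by (simp add: algebra_simps power2_eq_square)
  finally show ?thesis unfolding t_def \<sigma>_def .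
qed



lemma neg_side_inc:
  assumes "k \<ge> 3" "h > 0" "\<beta> > 0" "sdec (Bfun h \<beta> k) 0 a" "0 < a" "a \<le> 1"
  shows "\<exists>a0. -1 \<le> a0 \<and> a0 < 0 \<and> sinc (Bfun h \<beta> k) a0 0"
proof (cases "even k")
  case True
  then have "sinc (Bfun h \<beta> k) (-a) (-0)" using sinc_mirror[OF _ assms(4)] B_even by blast
  then show ?thesis using assms by (intro exI[of _ "-a"]) auto
next
  case False
  then show ?thesis using odd_inc[OF _ assms(2,3)] by (intro exI[of _ "-1"]) auto
qed

lemma caseA:
  assumes hpos: "h > 0" and bpos: "\<beta> > 0" and k3: "k \<ge> 3" and hb: "\<beta> \<ge> beta_tilde_c k h"
  shows "{x. local_maximizer (Bfun h \<beta> k) x} = {0} \<and> {x. global_maximizer (Bfun h \<beta> k) x} = {0}"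
proof -
  let ?B = "Bfun h \<beta> k"
  define n where "n = k - 2"
  have n: "k = n + 2" "n \<ge> 1" using k3 unfolding n_def by auto
  define m where "m = sqrt (real n / (real n + 1))"
  define M where "M = real n ^ n / (real n + 1) ^ (n + 1)"
  define c where "c = 2 * (\<beta> / (h * real k))\<^sup>2"
  have hk: "(h * real k)\<^sup>2 > 0" using hpos k3 by simp
  have bt0: "beta_tilde_c k h \<ge> 0" unfolding beta_tilde_c_def using hpos k3 by simp
  have "(beta_tilde_c k h)\<^sup>2 \<le> \<beta>\<^sup>2" using hb bt0 by (intro power_mono) auto
  then have "(h * real k)\<^sup>2 / 2 * M \<le> \<beta>\<^sup>2" using beta_tilde_sq[OF k3 hpos] unfolding M_def n_def by simp
  then have cM: "M \<le> c" unfolding c_def using hk by (simp add: power_divide field_simps)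
  have m01: "0 < m" "m < 1" unfolding m_def using n by auto
  have Nneg: "h * real k * x^(k-1) * sqrt (1 - x\<^sup>2) - sqrt 2 * \<beta> * x < 0" if "0 < x" "x < 1" "x \<noteq> m" for x
  proof (rule N_neg[OF that(1,2) hpos bpos k3])
    have "phi n x < M" unfolding M_def using phi_lt_max[OF n(2), of x] that unfolding m_def by simp
    then show "phi (k - 2) x < 2 * (\<beta> / (h * real k))\<^sup>2" using cM unfolding c_def n_def by simp
  qed
  have d1: "sdec ?B 0 m" by (rule B_sdec) (use m01 Nneg in auto)
  have d2: "sdec ?B m 1" by (rule B_sdec) (use m01 Nneg in auto)
  have dec: "sdec ?B 0 1" by (rule sdec_join[OF d1 d2])
  have inc: "sinc ?B (-1) 0"
  proof (cases "even k")
    case True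
    then show ?thesis using sinc_mirror[OF _ dec] B_even by simp
  next
    case False
    then show ?thesis using odd_inc hpos bpos by simp
  qed
  have loc: "{x. local_maximizer ?B x} = {0}"
  proof (intro set_eqI iffI)
    fix x :: real assume l: "x \<in> {x. local_maximizer ?B x}"
    then have "x \<in> {-1..1}" by (auto dest: local_in)
    then show "x \<in> {0}" using not_local_inc[OF inc, of x] not_local_dec[OF dec, of x] l
      by (cases "x < 0"; cases "0 < x") auto
  next
    fix x :: real assume "x \<in> {0}"
    then show "x \<in> {x. local_maximizer ?B x}" using peak[OF inc dec] by auto
  qed
  obtain g where g: "global_maximizer ?B g" using global_exists[OF B_cont] by blast
  have g0: "g = 0" using g loc global_local by blast
  have "{x. global_maximizer ?B x} = {0}"
  proof (intro set_eqI iffI)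
    fix x assume "x \<in> {x. global_maximizer ?B x}"
    then show "x \<in> {0}" using loc global_local by blast
  qed (use g g0 in auto)
  then show ?thesis using loc by blast
qed



lemma c_mono: "0 < x \<Longrightarrow> x < y \<Longrightarrow> d > 0 \<Longrightarrow> 2 * (x / d)\<^sup>2 < 2 * (y / (d::real))\<^sup>2"
  by (simp add: power_strict_mono divide_strict_right_mono)

lemma caseB:
  assumes hpos: "h > 0" and bpos: "\<beta> > 0" and k3: "k \<ge> 3" and hb: "\<beta> < beta_tilde_c k h"
  defines "B \<equiv> Bfun h \<beta> k"
  shows "\<exists>ah.
          ah ^ (2 * (k - 2)) * (1 - ah\<^sup>2) = 2 * (\<beta> / (h * real k))\<^sup>2
        \<and> (\<forall>x. x ^ (2 * (k - 2)) * (1 - x\<^sup>2) = 2 * (\<beta> / (h * real k))\<^sup>2 \<longrightarrow> x \<le> ah)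
        \<and> sqrt ((real k - 2) / (real k - 1)) < ah \<and> ah < 1
        \<and> (\<forall>x. sqrt ((real k - 2) / (real k - 1)) < x \<and> x < 1
               \<and> x ^ (2 * (k - 2)) * (1 - x\<^sup>2) = 2 * (\<beta> / (h * real k))\<^sup>2 \<longrightarrow> x = ah)
        \<and> {x\<in>{0..1}. local_maximizer B x} = {0, ah}
        \<and> (\<beta> > beta_c k h \<longrightarrow> {x\<in>{0..1}. global_maximizer B x} = {0})
        \<and> (\<beta> = beta_c k h \<longrightarrow> {x\<in>{0..1}. global_maximizer B x} = {0, ah})
        \<and> (\<beta> < beta_c k h \<longrightarrow> {x\<in>{0..1}. global_maximizer B x} = {ah})
        \<and> (k \<ge> 4 \<and> even k \<longrightarrow>
             (local_maximizer B ah \<longrightarrow> local_maximizer B (- ah))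
           \<and> (global_maximizer B ah \<longrightarrow> global_maximizer B (- ah))
           \<and> {x\<in>{-1..<0}. local_maximizer B x} = {- ah}
           \<and> (global_maximizer B ah \<longrightarrow> {x\<in>{-1..<0}. global_maximizer B x} = {- ah}))"
proof -
  define n where "n = k - 2"
  have n: "k = n + 2" "n \<ge> 1" using k3 unfolding n_def by auto
  define m where "m = sqrt (real n / (real n + 1))"
  define M where "M = real n ^ n / (real n + 1) ^ (n + 1)"
  define c where "c = 2 * (\<beta> / (h * real k))\<^sup>2"
  have mk: "sqrt ((real k - 2) / (real k - 1)) = m" unfolding m_def using n by (simp add: add.commute)
  have phieq: "x ^ (2 * (k - 2)) * (1 - x\<^sup>2) = phi n x" for x unfolding phi_def n_def ..
  have hk: "(h * real k)\<^sup>2 > 0" using hpos k3 by simp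
  have c0: "c > 0" unfolding c_def using hpos bpos k3 by simp
  have "\<beta>\<^sup>2 < (beta_tilde_c k h)\<^sup>2" using hb bpos by (intro power_strict_mono) auto
  then have "\<beta>\<^sup>2 < (h * real k)\<^sup>2 / 2 * M" using beta_tilde_sq[OF k3 hpos] unfolding M_def n_def by simp
  then have cM: "c < M" unfolding c_def using hk by (simp add: power_divide field_simps)
  have m01: "0 < m" "m < 1" unfolding m_def using n by auto
  have pinc: "sinc (phi n) 0 m" unfolding m_def by (rule phi_inc[OF n(2)])
  have pdec: "sdec (phi n) m 1" unfolding m_def by (rule phi_dec[OF n(2)])
  have pm: "phi n m = M" unfolding m_def M_def by (rule phi_max[OF n(2)])
  have p0: "phi n 0 = 0" "phi n 1 = 0" using phi_zero1(1)[OF n(2)] phi_zero1(2) by auto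
  obtain a1 where a1: "0 \<le> a1" "a1 \<le> m" "phi n a1 = c"
    using IVT'[of "phi n" 0 c m] p0 c0 cM pm m01 phi_cont by force
  have a1': "0 < a1" "a1 < m" using a1 p0 c0 cM pm by (auto simp: order_le_less)
  obtain ah where ah: "m \<le> ah" "ah \<le> 1" "phi n ah = c"
    using IVT2'[of "phi n" 1 c m] p0 c0 cM pm m01 phi_cont by force
  have ah': "m < ah" "ah < 1" using ah p0 c0 cM pm by (auto simp: order_le_less)
  have s1: "phi n x < c" if "0 < x" "x < a1" for x
    using pinc that a1 a1' unfolding sinc_def by auto
  have s2: "phi n x > c" if "a1 < x" "x < ah" for x
  proof -
    consider "x < m" | "x = m" | "m < x" by linarith
    then show ?thesis
    proof cases
      case 1 then show ?thesis using pinc that a1 a1' unfolding sinc_def by auto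
    next
      case 2 then show ?thesis using pm cM by simp
    next
      case 3 then show ?thesis using pdec that ah ah' unfolding sdec_def by auto
    qed
  qed
  have s3: "phi n x < c" if "ah < x" "x < 1" for x
    using pdec that ah ah' unfolding sdec_def by auto
  have kn: "k - 2 = n" unfolding n_def ..
  have d1: "sdec B 0 a1" unfolding B_def
  proof (rule B_sdec)
    fix x :: real assume x: "0 < x" "x < a1"
    have ph: "phi (k-2) x < 2 * (\<beta> / (h * real k))\<^sup>2" unfolding kn c_def[symmetric] using s1[OF x] .
    show "h * real k * x^(k-1) * sqrt (1 - x\<^sup>2) - sqrt 2 * \<beta> * x < 0"
      by (rule N_neg[OF _ _ hpos bpos k3 ph]) (use x a1' m01 in auto)
  qed (use a1' m01 in auto)
  have i1: "sinc B a1 ah" unfolding B_def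
  proof (rule B_sinc)
    fix x :: real assume x: "a1 < x" "x < ah"
    have ph: "phi (k-2) x > 2 * (\<beta> / (h * real k))\<^sup>2" unfolding kn c_def[symmetric] using s2[OF x] .
    show "h * real k * x^(k-1) * sqrt (1 - x\<^sup>2) - sqrt 2 * \<beta> * x > 0"
      by (rule N_pos[OF _ _ hpos bpos k3 ph]) (use x a1' ah' m01 in auto)
  qed (use a1' ah' m01 in auto)
  have d2: "sdec B ah 1" unfolding B_def
  proof (rule B_sdec)
    fix x :: real assume x: "ah < x" "x < 1"
    have ph: "phi (k-2) x < 2 * (\<beta> / (h * real k))\<^sup>2" unfolding kn c_def[symmetric] using s3[OF x] .
    show "h * real k * x^(k-1) * sqrt (1 - x\<^sup>2) - sqrt 2 * \<beta> * x < 0"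
      by (rule N_neg[OF _ _ hpos bpos k3 ph]) (use x ah' m01 in auto)
  qed (use ah' m01 in auto)
  obtain a0 where a0: "-1 \<le> a0" "a0 < 0" "sinc B a0 0"
    using neg_side_inc[OF k3 hpos bpos d1[unfolded B_def]] a1' m01 unfolding B_def by auto
  have loc0: "local_maximizer B 0" using peak[OF a0(3) d1] a0 a1' m01 by auto
  have locah: "local_maximizer B ah" using peak[OF i1 d2] a1' ah' m01 by auto
  have loc01: "{x\<in>{0..1}. local_maximizer B x} = {0, ah}"
  proof (intro set_eqI iffI)
    fix x assume l: "x \<in> {x\<in>{0..1}. local_maximizer B x}"
    then have x: "0 \<le> x" "x \<le> 1" "local_maximizer B x" by auto
    show "x \<in> {0, ah}"
    proof (rule ccontr)
      assume nx: "x \<notin> {0, ah}"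
      consider "0 < x \<and> x \<le> a1" | "a1 \<le> x \<and> x < ah" | "ah < x" using x nx by force
      then show False
      proof cases
        case 1 then show ?thesis using not_local_dec[OF d1, of x] x a1' m01 by auto
      next
        case 2 then show ?thesis using not_local_inc[OF i1, of x] x a1' ah' m01 by auto
      next
        case 3 then show ?thesis using not_local_dec[OF d2, of x] x a1' ah' m01 by auto
      qed
    qed
  next
    fix x assume "x \<in> {0, ah}"
    then show "x \<in> {x\<in>{0..1}. local_maximizer B x}" using loc0 locah ah' m01 by auto
  qed
  have Bsym: "\<And>x. B (-x) = B x" if "even k" unfolding B_def using B_even[OF that] by simp
  obtain g where g: "global_maximizer B g" using global_exists[OF B_cont] unfolding B_def by blast
  have gex: "global_maximizer B 0 \<or> global_maximizer B ah"
  proof (cases "g \<ge> 0")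
    case True
    then have "g \<in> {x\<in>{0..1}. local_maximizer B x}" using g global_local unfolding global_maximizer_def by auto
    then have "g = 0 \<or> g = ah" using loc01 by blast
    then show ?thesis using g by auto
  next
    case False
    then have gi: "g \<in> {-1..<0}" "local_maximizer B g" using g global_local unfolding global_maximizer_def by auto
    show ?thesis
    proof (cases "even k")
      case True
      have "global_maximizer B (-g)" by (rule global_mirror[of B, OF Bsym[OF True] g])
      then have "-g \<in> {x\<in>{0..1}. local_maximizer B x}" using gi global_local by auto
      then have "-g \<in> {0, ah}" using loc01 by blast
      then have "-g = ah" using gi by auto
      then show ?thesis using \<open>global_maximizer B (-g)\<close> by simp
    next
      case False
      then show ?thesis using odd_part[OF _ hpos bpos, of k] gi unfolding B_def by auto
    qed
  qed
  define \<sigma> where "\<sigma> = sqrt (1 - ah\<^sup>2)"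
  have cmp: "B ah - B 0 = h * ah^(k-2) * (1 - \<sigma>) * (1 - (real k - 1) * \<sigma>)"
    unfolding B_def \<sigma>_def by (rule Bcomp[OF k3 hpos bpos]) (use ah' m01 ah kn c_def in auto)
  have sig: "0 < \<sigma>" "\<sigma> < 1" unfolding \<sigma>_def using ah' m01 sqrt_pos1[of ah] by (auto simp: power_less_one_iff)
  have Ppos: "h * ah^(k-2) * (1 - \<sigma>) > 0" using hpos ah' m01 sig by simp
  define ac where "ac = sqrt (1 - 1 / (real k - 1)\<^sup>2)"
  note bcp = beta_c_props[OF k3 hpos, folded ac_def]
  have bc0: "beta_c k h > 0" by (rule bcp(1))
  have pac: "phi n ac = 2 * (beta_c k h / (h * real k))\<^sup>2" using bcp(2) kn by simp
  have ac01: "m < ac" "ac < 1" using bcp(3,4) kn unfolding m_def by auto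
  have sac: "sqrt (1 - ac\<^sup>2) = 1 / (real k - 1)" by (rule bcp(5))
  have k1: "real k - 1 > 0" using k3 by simp
  have Bsign: "(B ah > B 0 \<longleftrightarrow> ac < ah) \<and> (B ah = B 0 \<longleftrightarrow> ac = ah)"
  proof -
    have "(ac < ah \<longrightarrow> (real k - 1) * \<sigma> < 1) \<and> (ac = ah \<longrightarrow> (real k - 1) * \<sigma> = 1)
        \<and> (ah < ac \<longrightarrow> (real k - 1) * \<sigma> > 1)"
    proof (intro conjI impI)
      assume "ac < ah"
      then have "ac\<^sup>2 < ah\<^sup>2" using ac01 m01 by (intro power_strict_mono) auto
      then have "\<sigma> < sqrt (1 - ac\<^sup>2)" unfolding \<sigma>_def by simp
      then show "(real k - 1) * \<sigma> < 1" unfolding sac using k1 by (simp add: field_simps)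
    next
      assume "ac = ah"
      then show "(real k - 1) * \<sigma> = 1" unfolding \<sigma>_def using sac k1 by simp
    next
      assume "ah < ac"
      then have "ah\<^sup>2 < ac\<^sup>2" using ah' m01 by (intro power_strict_mono) auto
      then have "sqrt (1 - ac\<^sup>2) < \<sigma>" unfolding \<sigma>_def by simp
      then show "(real k - 1) * \<sigma> > 1" unfolding sac using k1 by (simp add: field_simps)
    qed
    moreover have "B ah - B 0 > 0 \<longleftrightarrow> (1 - (real k - 1) * \<sigma>) > 0"
    proof -
      have aux: "0 < p \<Longrightarrow> (0 < p * q \<longleftrightarrow> 0 < (q::real))" for p q by (simp add: zero_less_mult_iff)
      show ?thesis unfolding cmp by (rule aux[OF Ppos])
    qed
    moreover have "B ah - B 0 = 0 \<longleftrightarrow> (1 - (real k - 1) * \<sigma>) = 0"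
    proof -
      have aux: "0 < p \<Longrightarrow> (p * q = 0 \<longleftrightarrow> (q::real) = 0)" for p q by simp
      show ?thesis unfolding cmp by (rule aux[OF Ppos])
    qed
    ultimately show ?thesis
      by (cases "ac < ah"; cases "ac = ah") (auto simp: not_less)
  qed
  have ordc: "(beta_c k h < \<beta> \<longrightarrow> ah < ac) \<and> (beta_c k h = \<beta> \<longrightarrow> ah = ac) \<and> (\<beta> < beta_c k h \<longrightarrow> ac < ah)"
  proof -
    have pd: "phi n y < phi n x" if "m \<le> x" "x < y" "y \<le> 1" for x y using pdec that unfolding sdec_def by auto
    have hk0: "h * real k > 0" using hpos k3 by simp
    have pah: "phi n ah = 2 * (\<beta> / (h * real k))\<^sup>2" using ah(3) unfolding c_def .
    have tri: "ah < ac \<or> ah = ac \<or> ac < ah" by linarith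
    show ?thesis
    proof (intro conjI impI)
      assume "beta_c k h < \<beta>"
      then have "phi n ac < phi n ah" unfolding pac pah by (rule c_mono[OF bc0 _ hk0])
      moreover have "\<not> phi n ac < phi n ah" if "ac < ah" using pd[of ac ah] ac01 ah' that by auto
      ultimately show "ah < ac" using tri by auto
    next
      assume e: "beta_c k h = \<beta>"
      have "phi n ac = phi n ah" unfolding pac pah e ..
      moreover have "phi n ac \<noteq> phi n ah" if "ac < ah" using pd[of ac ah] ac01 ah' that by auto
      moreover have "phi n ac \<noteq> phi n ah" if "ah < ac" using pd[of ah ac] ac01 ah' that by auto
      ultimately show "ah = ac" using tri by auto
    next
      assume "\<beta> < beta_c k h"
      then have "phi n ah < phi n ac" unfolding pac pah by (rule c_mono[OF bpos _ hk0])
      moreover have "\<not> phi n ah < phi n ac" if "ah < ac" using pd[of ah ac] ac01 ah' that by auto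
      ultimately show "ac < ah" using tri by auto
    qed
  qed
  have in01: "0 \<in> {-1..1::real}" "ah \<in> {-1..1}" using ah' m01 by auto
  have gl01: "x = 0 \<or> x = ah" if "global_maximizer B x" "0 \<le> x" "x \<le> 1" for x
  proof -
    have "x \<in> {x\<in>{0..1}. local_maximizer B x}" using that global_local by auto
    then show ?thesis using loc01 by blast
  qed
  have glob_lt: "{x\<in>{0..1}. global_maximizer B x} = {0}" if "B ah < B 0"
  proof -
    have "\<not> global_maximizer B ah"
    proof
      assume "global_maximizer B ah"
      then have "B 0 \<le> B ah" using in01 unfolding global_maximizer_def by blast
      then show False using that by simp
    qed
    then have "global_maximizer B 0" using gex by auto
    then show ?thesis using gl01 \<open>\<not> global_maximizer B ah\<close> by auto
  qed
  have glob_gt: "{x\<in>{0..1}. global_maximizer B x} = {ah}" if "B 0 < B ah"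
  proof -
    have "\<not> global_maximizer B 0"
    proof
      assume "global_maximizer B 0"
      then have "B ah \<le> B 0" using in01 unfolding global_maximizer_def by blast
      then show False using that by simp
    qed
    then have "global_maximizer B ah" using gex by auto
    then show ?thesis using gl01 \<open>\<not> global_maximizer B 0\<close> ah' m01 by auto
  qed
  have glob_eq: "{x\<in>{0..1}. global_maximizer B x} = {0, ah}" if "B 0 = B ah"
  proof -
    have "global_maximizer B 0" "global_maximizer B ah"
      using gex global_eq[of B 0 ah] global_eq[of B ah 0] that in01 by auto
    then show ?thesis using gl01 ah' m01 by auto
  qed
  have evenpart: "k \<ge> 4 \<and> even k \<longrightarrow>
             (local_maximizer B ah \<longrightarrow> local_maximizer B (- ah))
           \<and> (global_maximizer B ah \<longrightarrow> global_maximizer B (- ah))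
           \<and> {x\<in>{-1..<0}. local_maximizer B x} = {- ah}
           \<and> (global_maximizer B ah \<longrightarrow> {x\<in>{-1..<0}. global_maximizer B x} = {- ah})"
  proof (rule impI, intro conjI)
    assume ev: "4 \<le> k \<and> even k"
    then have S: "\<And>x. B (-x) = B x" using Bsym by blast
    show "local_maximizer B ah \<longrightarrow> local_maximizer B (- ah)" using local_mirror[of B, OF S] by blast
    show "global_maximizer B ah \<longrightarrow> global_maximizer B (- ah)" using global_mirror[of B, OF S] by blast
    show lneg: "{x\<in>{-1..<0}. local_maximizer B x} = {- ah}"
    proof (intro set_eqI iffI)
      fix x assume "x \<in> {x\<in>{-1..<0}. local_maximizer B x}"
      then have x: "-1 \<le> x" "x < 0" "local_maximizer B x" by auto
      then have "local_maximizer B (-x)" using local_mirror[of B, OF S] by blast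
      then have "-x \<in> {x\<in>{0..1}. local_maximizer B x}" using x by auto
      then have "-x \<in> {0, ah}" using loc01 by blast
      then show "x \<in> {-ah}" using x by auto
    next
      fix x assume "x \<in> {-ah}"
      then show "x \<in> {x\<in>{-1..<0}. local_maximizer B x}" using local_mirror[of B, OF S locah] ah' m01 by auto
    qed
    show "global_maximizer B ah \<longrightarrow> {x\<in>{-1..<0}. global_maximizer B x} = {- ah}"
    proof
      assume ga: "global_maximizer B ah"
      show "{x\<in>{-1..<0}. global_maximizer B x} = {- ah}"
        using lneg global_local global_mirror[of B, OF S ga] ah' m01 by auto
    qed
  qed
  show ?thesis
  proof (intro exI[of _ ah] conjI)
    show "ah ^ (2 * (k - 2)) * (1 - ah\<^sup>2) = 2 * (\<beta> / (h * real k))\<^sup>2" unfolding phieq c_def[symmetric] by (rule ah(3))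
    show "\<forall>x. x ^ (2 * (k - 2)) * (1 - x\<^sup>2) = 2 * (\<beta> / (h * real k))\<^sup>2 \<longrightarrow> x \<le> ah"
    proof (intro allI impI)
      fix x assume "x ^ (2 * (k - 2)) * (1 - x\<^sup>2) = 2 * (\<beta> / (h * real k))\<^sup>2"
      then have px: "phi n x = c" unfolding phieq c_def .
      show "x \<le> ah"
      proof (rule ccontr)
        assume "\<not> x \<le> ah"
        then have "ah < x" by simp
        then show False using s3[of x] phi_nonpos[of x n] px c0 by (cases "x < 1") auto
      qed
    qed
    show "sqrt ((real k - 2) / (real k - 1)) < ah" "ah < 1" unfolding mk using ah' by auto
    show "\<forall>x. sqrt ((real k - 2) / (real k - 1)) < x \<and> x < 1
               \<and> x ^ (2 * (k - 2)) * (1 - x\<^sup>2) = 2 * (\<beta> / (h * real k))\<^sup>2 \<longrightarrow> x = ah"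
    proof (intro allI impI)
      fix x assume "sqrt ((real k - 2) / (real k - 1)) < x \<and> x < 1
               \<and> x ^ (2 * (k - 2)) * (1 - x\<^sup>2) = 2 * (\<beta> / (h * real k))\<^sup>2"
      then have x: "m < x" "x < 1" "phi n x = c" unfolding mk phieq c_def by auto
      have pd: "phi n v < phi n u" if "m \<le> u" "u < v" "v \<le> 1" for u v
        using pdec that unfolding sdec_def by blast
      show "x = ah"
      proof (rule ccontr)
        assume "x \<noteq> ah"
        then have "x < ah \<or> ah < x" by linarith
        then show False using pd[of x ah] pd[of ah x] x ah ah' by auto
      qed
    qed
    show "{x\<in>{0..1}. local_maximizer B x} = {0, ah}" by (rule loc01)
    show "\<beta> > beta_c k h \<longrightarrow> {x\<in>{0..1}. global_maximizer B x} = {0}"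
    proof
      assume "\<beta> > beta_c k h"
      then have "ah < ac" using ordc by blast
      then have "\<not> B ah > B 0" "B ah \<noteq> B 0" using Bsign by auto
      then show "{x\<in>{0..1}. global_maximizer B x} = {0}" by (intro glob_lt) auto
    qed
    show "\<beta> = beta_c k h \<longrightarrow> {x\<in>{0..1}. global_maximizer B x} = {0, ah}"
    proof
      assume "\<beta> = beta_c k h"
      then have "ah = ac" using ordc by simp
      then have "B 0 = B ah" using Bsign by auto
      then show "{x\<in>{0..1}. global_maximizer B x} = {0, ah}" by (rule glob_eq)
    qed
    show "\<beta> < beta_c k h \<longrightarrow> {x\<in>{0..1}. global_maximizer B x} = {ah}"
    proof
      assume "\<beta> < beta_c k h"
      then have "ac < ah" using ordc by blast
      then have "B 0 < B ah" using Bsign by auto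
      then show "{x\<in>{0..1}. global_maximizer B x} = {ah}" by (rule glob_gt)
    qed
  qed (use evenpart in blast)+
qed

theorem lemma5p1:
  fixes h \<beta> :: real and k :: nat
  assumes hpos: "h > 0" and bpos: "\<beta> > 0"
  defines "B \<equiv> Bfun h \<beta> k"
  shows
   "(k = 1 \<longrightarrow>
       (SUP a\<in>{-1..1}. B a) = sqrt (h\<^sup>2 + 2 * \<beta>\<^sup>2)
     \<and> {x. local_maximizer B x} = {h / sqrt (h\<^sup>2 + 2 * \<beta>\<^sup>2)}
     \<and> {x. global_maximizer B x} = {h / sqrt (h\<^sup>2 + 2 * \<beta>\<^sup>2)})
  \<and> (k = 2 \<longrightarrow> \<beta> \<ge> beta_c 2 h \<longrightarrow>
       {x. local_maximizer B x} = {0} \<and> {x. global_maximizer B x} = {0})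
  \<and> (k = 2 \<longrightarrow> \<beta> < beta_c 2 h \<longrightarrow>
       (SUP a\<in>{-1..1}. B a) = h + \<beta>\<^sup>2 / (2 * h)
     \<and> {x. local_maximizer B x} =
         {sqrt (1 - \<beta>\<^sup>2 / (2 * h\<^sup>2)), - sqrt (1 - \<beta>\<^sup>2 / (2 * h\<^sup>2))}
     \<and> {x. global_maximizer B x} =
         {sqrt (1 - \<beta>\<^sup>2 / (2 * h\<^sup>2)), - sqrt (1 - \<beta>\<^sup>2 / (2 * h\<^sup>2))})
  \<and> (k \<ge> 3 \<longrightarrow> \<beta> \<ge> beta_tilde_c k h \<longrightarrow>
       {x. local_maximizer B x} = {0} \<and> {x. global_maximizer B x} = {0})
  \<and> (k \<ge> 3 \<longrightarrow> \<beta> < beta_tilde_c k h \<longrightarrow>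
       (\<exists>ah.
          ah ^ (2 * (k - 2)) * (1 - ah\<^sup>2) = 2 * (\<beta> / (h * real k))\<^sup>2
        \<and> (\<forall>x. x ^ (2 * (k - 2)) * (1 - x\<^sup>2) = 2 * (\<beta> / (h * real k))\<^sup>2 \<longrightarrow> x \<le> ah)
        \<and> sqrt ((real k - 2) / (real k - 1)) < ah \<and> ah < 1
        \<and> (\<forall>x. sqrt ((real k - 2) / (real k - 1)) < x \<and> x < 1
               \<and> x ^ (2 * (k - 2)) * (1 - x\<^sup>2) = 2 * (\<beta> / (h * real k))\<^sup>2 \<longrightarrow> x = ah)
        \<and> {x\<in>{0..1}. local_maximizer B x} = {0, ah}
        \<and> (\<beta> > beta_c k h \<longrightarrow> {x\<in>{0..1}. global_maximizer B x} = {0})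
        \<and> (\<beta> = beta_c k h \<longrightarrow> {x\<in>{0..1}. global_maximizer B x} = {0, ah})
        \<and> (\<beta> < beta_c k h \<longrightarrow> {x\<in>{0..1}. global_maximizer B x} = {ah})
        \<and> (k \<ge> 4 \<and> even k \<longrightarrow>
             (local_maximizer B ah \<longrightarrow> local_maximizer B (- ah))
           \<and> (global_maximizer B ah \<longrightarrow> global_maximizer B (- ah))
           \<and> {x\<in>{-1..<0}. local_maximizer B x} = {- ah}
           \<and> (global_maximizer B ah \<longrightarrow> {x\<in>{-1..<0}. global_maximizer B x} = {- ah}))))
  \<and> (k \<ge> 3 \<and> odd k \<longrightarrow> {x\<in>{-1..<0}. local_maximizer B x} = {})"
  proof -
  have p1: "k = 1 \<longrightarrow>
       (SUP a\<in>{-1..1}. B a) = sqrt (h\<^sup>2 + 2 * \<beta>\<^sup>2)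
     \<and> {x. local_maximizer B x} = {h / sqrt (h\<^sup>2 + 2 * \<beta>\<^sup>2)}
     \<and> {x. global_maximizer B x} = {h / sqrt (h\<^sup>2 + 2 * \<beta>\<^sup>2)}"
    unfolding B_def using case_k1[OF hpos bpos] by blast
  have p2: "k = 2 \<longrightarrow> \<beta> \<ge> beta_c 2 h \<longrightarrow>
       {x. local_maximizer B x} = {0} \<and> {x. global_maximizer B x} = {0}"
    unfolding B_def using case_k2a[OF hpos bpos] by blast
  have p3: "k = 2 \<longrightarrow> \<beta> < beta_c 2 h \<longrightarrow>
       (SUP a\<in>{-1..1}. B a) = h + \<beta>\<^sup>2 / (2 * h)
     \<and> {x. local_maximizer B x} =
         {sqrt (1 - \<beta>\<^sup>2 / (2 * h\<^sup>2)), - sqrt (1 - \<beta>\<^sup>2 / (2 * h\<^sup>2))}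
     \<and> {x. global_maximizer B x} =
         {sqrt (1 - \<beta>\<^sup>2 / (2 * h\<^sup>2)), - sqrt (1 - \<beta>\<^sup>2 / (2 * h\<^sup>2))}"
    unfolding B_def using case_k2b[OF hpos bpos] by blast
  have p4: "k \<ge> 3 \<longrightarrow> \<beta> \<ge> beta_tilde_c k h \<longrightarrow>
       {x. local_maximizer B x} = {0} \<and> {x. global_maximizer B x} = {0}"
    unfolding B_def using caseA[OF hpos bpos] by blast
  have p6: "k \<ge> 3 \<and> odd k \<longrightarrow> {x\<in>{-1..<0}. local_maximizer B x} = {}"
    unfolding B_def using odd_part[OF _ hpos bpos] by blast
  show ?thesis
    using p1 p2 p3 p4 p6 caseB[OF hpos bpos, of k, folded B_def] by blast
qed

end
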